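(* Any time-optimal trajectory of the problem below (with $T>0$) ends with an $X$-arc; that is, the control $A$ equals $X$ on some interval $(T-\delta,T]$, $\delta>0$.
   Context: Fix $\gamma\in(0,\pi/2)$, $s=\sin\gamma$, $c=\cos\gamma$, and $X=\begin{pmatrix}0&s^2&sc\\-s^2&0&0\\-sc&0&0\end{pmatrix}$, $Y=\begin{pmatrix}0&1&0\\-1&0&0\\0&0&0\end{pmatrix}$ on $\mathbb R^3$ with standard basis $e_1,e_2,e_3$. Let $\Sigma=\{\psi:\langle e_3,\psi\rangle=0\}$, $\psi_0=(0,s,c)^\top$. Time-optimal problem: over piecewise constant controls $A:[0,T]\to\{X,Y\}$ with finitely many discontinuities and trajectories $\dot\psi=A(t)\psi$, $\psi(0)=\psi_0$, minimize $T$ subject to $\psi(T)\in\Sigma$. Maximal intervals on which $A\equiv X$ are called $X$-arcs. *)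

theory Defs
  imports "HOL-Analysis.Analysis"
begin

text \<open>Standard basis vectors e1, e2, e3 of real^3 correspond to indices 1, 2, 3 of type 3.\<close>

definition matX :: "real \<Rightarrow> real^3^3" where
  "matX \<gamma> = (\<chi> i j.
     if i = 1 \<and> j = 2 then (sin \<gamma>)^2
     else if i = 1 \<and> j = 3 then sin \<gamma> * cos \<gamma>
     else if i = 2 \<and> j = 1 then - ((sin \<gamma>)^2)
     else if i = 3 \<and> j = 1 then - (sin \<gamma> * cos \<gamma>)
     else 0)"

definition matY :: "real^3^3" where
  "matY = (\<chi> i j.
     if i = 1 \<and> j = 2 then 1
     else if i = 2 \<and> j = 1 then -1
     else 0)"

definition psi0 :: "real \<Rightarrow> real^3" where
  "psi0 \<gamma> = (\<chi> i. if i = 1 then 0 else if i = 2 then sin \<gamma> else cos \<gamma>)"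

definition Sigma_set :: "(real^3) set" where
  "Sigma_set = {\<psi>. \<psi> $ 3 = 0}"

definition pw_const_control :: "real \<Rightarrow> real \<Rightarrow> (real \<Rightarrow> real^3^3) \<Rightarrow> bool" where
  "pw_const_control \<gamma> T A \<longleftrightarrow>
     (\<forall>t\<in>{0..T}. A t \<in> {matX \<gamma>, matY}) \<and>
     (\<exists>D. finite D \<and> (\<forall>t\<in>{0..T} - D. \<exists>e>0. \<forall>s\<in>{0..T}. \<bar>s - t\<bar> < e \<longrightarrow> A s = A t))"

definition trajectory :: "real \<Rightarrow> real \<Rightarrow> (real \<Rightarrow> real^3^3) \<Rightarrow> (real \<Rightarrow> real^3) \<Rightarrow> bool" where
  "trajectory \<gamma> T A \<psi> \<longleftrightarrow>
     continuous_on {0..T} \<psi> \<and> \<psi> 0 = psi0 \<gamma> \<and>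
     (\<exists>D. finite D \<and> (\<forall>t\<in>{0<..<T} - D. (\<psi> has_vector_derivative (A t *v \<psi> t)) (at t)))"

definition admissible :: "real \<Rightarrow> real \<Rightarrow> (real \<Rightarrow> real^3^3) \<Rightarrow> (real \<Rightarrow> real^3) \<Rightarrow> bool" where
  "admissible \<gamma> T A \<psi> \<longleftrightarrow>
     0 \<le> T \<and> pw_const_control \<gamma> T A \<and> trajectory \<gamma> T A \<psi> \<and> \<psi> T \<in> Sigma_set"

definition time_optimal :: "real \<Rightarrow> real \<Rightarrow> (real \<Rightarrow> real^3^3) \<Rightarrow> (real \<Rightarrow> real^3) \<Rightarrow> bool" where
  "time_optimal \<gamma> T A \<psi> \<longleftrightarrow>
     admissible \<gamma> T A \<psi> \<and> (\<forall>T' A' \<psi>'. admissible \<gamma> T' A' \<psi>' \<longrightarrow> T \<le> T')"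

end

theory Submission
  imports Defs
begin

lemma avoid_finite:
  fixes D :: "real set"
  assumes "finite D" "0 < T"
  shows "\<exists>e>0. e \<le> T \<and> (\<forall>t\<in>{T-e<..<T}. t \<notin> D)"
proof -
  define M where "M = insert T ((\<lambda>d. T - d) ` {d\<in>D. d<T})"
  have fM: "finite M" using assms(1) unfolding M_def by auto
  have pos: "\<forall>m\<in>M. 0 < m" unfolding M_def using assms(2) by auto
  define e where "e = Min M"
  have "e \<in> M" unfolding e_def using fM M_def Min_in by blast
  hence e0: "e > 0" using pos by auto
  have le: "\<And>m. m \<in> M \<Longrightarrow> e \<le> m" unfolding e_def using fM by simp
  have "e \<le> T" using le M_def by auto
  moreover have "\<forall>t\<in>{T-e<..<T}. t \<notin> D"
  proof
    fix t assume t: "t \<in> {T-e<..<T}"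
    show "t \<notin> D"
    proof
      assume "t \<in> D"
      hence "T - t \<in> M" using t unfolding M_def by auto
      hence "e \<le> T - t" by (rule le)
      thus False using t by auto
    qed
  qed
  ultimately show ?thesis using e0 by blast
qed

lemma matY_3: "(matY *v v) $ 3 = 0"
  unfolding matY_def matrix_vector_mult_def by (simp add: sum_3)

theorem lemmaA1:
  fixes \<gamma> T :: real and A :: "real \<Rightarrow> real^3^3" and \<psi> :: "real \<Rightarrow> real^3"
  assumes "0 < \<gamma>" and "\<gamma> < pi / 2"
    and "time_optimal \<gamma> T A \<psi>"
    and "0 < T"
  shows "\<exists>\<delta>>0. \<forall>t\<in>{T - \<delta><..<T}. A t = matX \<gamma>"
proof -
  have adm: "admissible \<gamma> T A \<psi>" and opt: "\<And>T' A' \<psi>'. admissible \<gamma> T' A' \<psi>' \<Longrightarrow> T \<le> T'"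
    using assms(3) unfolding time_optimal_def by auto
  have vals: "\<forall>t\<in>{0..T}. A t \<in> {matX \<gamma>, matY}"
    and cont: "continuous_on {0..T} \<psi>" and init: "\<psi> 0 = psi0 \<gamma>"
    and sig: "\<psi> T \<in> Sigma_set"
    using adm unfolding admissible_def pw_const_control_def trajectory_def by auto
  obtain D1 where D1: "finite D1" "\<forall>t\<in>{0..T} - D1. \<exists>e>0. \<forall>s\<in>{0..T}. \<bar>s - t\<bar> < e \<longrightarrow> A s = A t"
    using adm unfolding admissible_def pw_const_control_def by blast
  obtain D2 where D2: "finite D2" "\<forall>t\<in>{0<..<T} - D2. (\<psi> has_vector_derivative (A t *v \<psi> t)) (at t)"
    using adm unfolding admissible_def trajectory_def by blast
  obtain e where e: "e > 0" "e \<le> T" "\<forall>t\<in>{T-e<..<T}. t \<notin> D1"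
    using avoid_finite[OF D1(1) assms(4)] by blast
  define S where "S = {T-e<..<T}"
  have "A constant_on S"
  proof (rule locally_constant_imp_constant)
    show "connected S" unfolding S_def by simp
  next
    fix a assume a: "a \<in> S"
    hence "a \<in> {0..T} - D1" using e unfolding S_def by auto
    then obtain ea where ea: "ea > 0" "\<forall>s\<in>{0..T}. \<bar>s - a\<bar> < ea \<longrightarrow> A s = A a"
      using D1(2) by blast
    show "\<exists>U. openin (top_of_set S) U \<and> a \<in> U \<and> (\<forall>x\<in>U. A x = A a)"
    proof (intro exI conjI)
      show "openin (top_of_set S) (S \<inter> ball a ea)" by (rule openin_open_Int) simp
      show "a \<in> S \<inter> ball a ea" using a ea by simp
      show "\<forall>x\<in>S \<inter> ball a ea. A x = A a"
      proof
        fix x assume x: "x \<in> S \<inter> ball a ea"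
        hence "x \<in> {0..T}" using e unfolding S_def by auto
        moreover have "\<bar>x - a\<bar> < ea" using x by (simp add: dist_real_def abs_minus_commute)
        ultimately show "A x = A a" using ea by blast
      qed
    qed
  qed
  define t1 where "t1 = T - e/2"
  have t1S: "t1 \<in> S" unfolding S_def t1_def using e by auto
  have const: "\<And>t. t \<in> S \<Longrightarrow> A t = A t1"
    using \<open>A constant_on S\<close> t1S unfolding constant_on_def by metis
  have "A t1 \<in> {matX \<gamma>, matY}" using vals t1S e unfolding S_def by auto
  moreover have "A t1 \<noteq> matY"
  proof
    assume Y: "A t1 = matY"
    have t1: "0 \<le> t1" "t1 < T" using e unfolding t1_def by auto
    have "\<psi> T $ 3 = \<psi> t1 $ 3"
    proof (rule has_derivative_zero_unique_strong_interval[of "D2 \<union> {t1, T}" t1 T "\<lambda>s. \<psi> s $ 3"])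
      show "finite (D2 \<union> {t1, T})" using D2 by simp
      show "continuous_on {t1..T} (\<lambda>s. \<psi> s $ 3)"
        using continuous_on_subset[OF cont] t1 by (intro continuous_intros) auto
      show "T \<in> {t1..T}" using t1 by simp
      fix x assume x: "x \<in> {t1..T} - (D2 \<union> {t1, T})"
      hence xin: "x \<in> {0<..<T} - D2" using t1 by auto
      have xS: "x \<in> S" using x t1 unfolding S_def t1_def by auto
      have "(\<psi> has_vector_derivative (A x *v \<psi> x)) (at x)" using D2(2) xin by blast
      hence "((\<lambda>s. \<psi> s $ 3) has_vector_derivative ((A x *v \<psi> x) $ 3)) (at x)"
        by (rule bounded_linear.has_vector_derivative[OF bounded_linear_vec_nth])
      hence "((\<lambda>s. \<psi> s $ 3) has_vector_derivative 0) (at x)"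
        using const[OF xS] Y by (simp add: matY_3)
      hence "((\<lambda>s. \<psi> s $ 3) has_vector_derivative 0) (at x within {t1..T})"
        by (rule has_vector_derivative_at_within)
      thus "((\<lambda>s. \<psi> s $ 3) has_derivative (\<lambda>h. 0)) (at x within {t1..T})"
        by (simp add: has_vector_derivative_def)
    qed simp
    hence sig1: "\<psi> t1 \<in> Sigma_set" using sig unfolding Sigma_set_def by simp
    have "admissible \<gamma> t1 A \<psi>"
      unfolding admissible_def pw_const_control_def trajectory_def
    proof (intro conjI)
      show "0 \<le> t1" by fact
      show "\<forall>t\<in>{0..t1}. A t \<in> {matX \<gamma>, matY}" using vals t1 by auto
      show "\<exists>D. finite D \<and> (\<forall>t\<in>{0..t1} - D. \<exists>e>0. \<forall>s\<in>{0..t1}. \<bar>s - t\<bar> < e \<longrightarrow> A s = A t)"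
      proof (rule exI[of _ D1], intro conjI ballI)
        show "finite D1" by fact
        fix t assume "t \<in> {0..t1} - D1"
        hence "t \<in> {0..T} - D1" using t1 by auto
        then obtain ee where ee: "ee > 0" "\<forall>s\<in>{0..T}. \<bar>s - t\<bar> < ee \<longrightarrow> A s = A t" using D1(2) by blast
        show "\<exists>e>0. \<forall>s\<in>{0..t1}. \<bar>s - t\<bar> < e \<longrightarrow> A s = A t" using t1 ee by (intro exI[of _ ee]) auto
      qed
      show "continuous_on {0..t1} \<psi>" using continuous_on_subset[OF cont] t1 by auto
      show "\<psi> 0 = psi0 \<gamma>" by fact
      show "\<exists>D. finite D \<and> (\<forall>t\<in>{0<..<t1} - D. (\<psi> has_vector_derivative (A t *v \<psi> t)) (at t))"
        using D2 t1 by auto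
      show "\<psi> t1 \<in> Sigma_set" by fact
    qed
    hence "T \<le> t1" by (rule opt)
    thus False using t1 by simp
  qed
  ultimately have "A t1 = matX \<gamma>" by auto
  thus ?thesis using e const unfolding S_def by auto
qed

end
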